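(* Let $Q_k^A,Q_k^B$ be the SDQ iterates and $w_k^A,w_k^B$ the associated noise vectors (see context). Define the lower comparison system \[ Q_{k+1}^{A_L}-Q^*=(I+\alpha\gamma DP\Pi_{Q^*}-\alpha D)(Q_k^{A_L}-Q^* )+\alpha\gamma DP(\Pi_{Q_k^B}-\Pi_{Q^*})(Q_k^A-Q_k^B)+\alpha w_k^A, \] \[ Q_{k+1}^{B_L}-Q^*=(I+\alpha\gamma DP\Pi_{Q^*}-\alpha D)(Q_k^{B_L}-Q^* )+\alpha\gamma DP(\Pi_{Q^*}-\Pi_{Q_k^A})(Q_k^A-Q_k^B)+\alpha w_k^B, \] with arbitrary initial vectors $Q_0^{A_L},Q_0^{B_L}\in\mathbb{R}^{|\mathcal{S}||\mathcal{A}|}$. Suppose $Q_0^{A_L}-Q^*\le Q_0^A-Q^*$ and $Q_0^{B_L}-Q^*\le Q_0^B-Q^*$ element-wise. Then for all $k\ge0$, $Q_k^{A_L}-Q^*\le Q_k^A-Q^*$ and $Q_k^{B_L}-Q^*\le Q_k^B-Q^*$ element-wise.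
   Context: Finite MDP with states $\mathcal{S}=\{1,\dots,|\mathcal{S}|\}$, actions $\mathcal{A}=\{1,\dots,|\mathcal{A}|\}$, transitions $P(s'|s,a)$, bounded deterministic reward $r(s,a,s')$, discount $\gamma\in(0,1)$, optimal action-value function $Q^*$. Sampling distribution $d(s,a)>0$ on $\mathcal{S}\times\mathcal{A}$; at iteration $k$, $(s_k,a_k)\sim d$ i.i.d., $s_k'\sim P(\cdot|s_k,a_k)$, $r_{k+1}=r(s_k,a_k,s_k')$. Constant step-size $\alpha\in(0,1)$. SDQ: only entry $(s_k,a_k)$ is updated, $Q_{k+1}^A(s_k,a_k)=Q_k^A(s_k,a_k)+\alpha\{r_{k+1}+\gamma Q_k^A(s_k',\arg\max_aQ_k^B(s_k',a))-Q_k^A(s_k,a_k)\}$ and symmetrically for $B$ with roles of $A,B$ swapped. Vector notation: $Q\in\mathbb{R}^{|\mathcal{S}||\mathcal{A}|}$ stacks $Q(\cdot,1),\dots,Q(\cdot,|\mathcal{A}|)$, so $Q(s,a)=(e_a\otimes e_s)^TQ$. $D$ is the diagonal matrix with entry $d(s,a)$ at position $(s,a)$. $P\in\mathbb{R}^{|\mathcal{S}||\mathcal{A}|\times|\mathcal{S}|}$ has row $(s,a)$ equal to $P(\cdot|s,a)$. $R(s,a)=\mathbb{E}[r(s,a,s')|s,a]$. For $Q$, $\pi_Q(s)=\arg\max_aQ(s,a)$ (fixed tie-breaking) and $\Pi_Q\in\mathbb{R}^{|\mathcal{S}|\times|\mathcal{S}||\mathcal{A}|}$ has $s$-th row $e_{\pi_Q(s)}^T\otimes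 e_s^T$. Noise: $w_k^A=(e_{a_k}\otimes e_{s_k})r_{k+1}+\gamma(e_{a_k}\otimes e_{s_k})e_{s_k'}^T\Pi_{Q_k^B}Q_k^A-(e_{a_k}\otimes e_{s_k})(e_{a_k}\otimes e_{s_k})^TQ_k^A-(DR+\gamma DP\Pi_{Q_k^B}Q_k^A-DQ_k^A)$, and $w_k^B$ is the same with $A$ and $B$ swapped. Inequalities between vectors are element-wise. *)

theory Defs
  imports "HOL-Analysis.Analysis"
begin

text \<open>Vectors in R^(|S||A|) are represented as functions 's => 'a => real
  (entry (s,a)); vectors in R^|S| as functions 's => real. Element-wise
  inequality is the pointwise order on functions.\<close>

definition Dop :: "('s \<Rightarrow> 'a \<Rightarrow> real) \<Rightarrow> ('s \<Rightarrow> 'a \<Rightarrow> real) \<Rightarrow> ('s \<Rightarrow> 'a \<Rightarrow> real)" where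
  "Dop d x = (\<lambda>s a. d s a * x s a)"

text \<open>Transition matrix P: (P v)(s,a) = sum_{s'} P(s'|s,a) v(s'); here P s a s' = P(s'|s,a).\<close>
definition Pop :: "('s::finite \<Rightarrow> 'a \<Rightarrow> 's \<Rightarrow> real) \<Rightarrow> ('s \<Rightarrow> real) \<Rightarrow> ('s \<Rightarrow> 'a \<Rightarrow> real)" where
  "Pop P v = (\<lambda>s a. \<Sum>s'\<in>UNIV. P s a s' * v s')"

text \<open>Matrix Pi_Q for the greedy policy pi_Q: (Pi_Q x)(s) = x(s, pi_Q(s)).\<close>
definition Piop :: "('s \<Rightarrow> 'a) \<Rightarrow> ('s \<Rightarrow> 'a \<Rightarrow> real) \<Rightarrow> ('s \<Rightarrow> real)" where
  "Piop pol x = (\<lambda>s. x s (pol s))"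

definition Rexp :: "('s::finite \<Rightarrow> 'a \<Rightarrow> 's \<Rightarrow> real) \<Rightarrow> ('s \<Rightarrow> 'a \<Rightarrow> 's \<Rightarrow> real) \<Rightarrow> ('s \<Rightarrow> 'a \<Rightarrow> real)" where
  "Rexp P r = (\<lambda>s a. \<Sum>s'\<in>UNIV. P s a s' * r s a s')"

definition Qstar :: "('s::finite \<Rightarrow> 'a::finite \<Rightarrow> 's \<Rightarrow> real) \<Rightarrow> ('s \<Rightarrow> 'a \<Rightarrow> 's \<Rightarrow> real) \<Rightarrow> real \<Rightarrow> ('s \<Rightarrow> 'a \<Rightarrow> real)" where
  "Qstar P r \<gamma> = (THE Q. \<forall>s a. Q s a = Rexp P r s a + \<gamma> * (\<Sum>s'\<in>UNIV. P s a s' * Max (range (Q s'))))"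

text \<open>Noise vector w_k for an update of table X whose greedy action is taken
  from table Y (w^A: X = Q^A, Y = Q^B; w^B: X = Q^B, Y = Q^A), at sample (sk,ak,sk').\<close>
definition noise :: "('s::finite \<Rightarrow> 'a \<Rightarrow> real) \<Rightarrow> ('s \<Rightarrow> 'a \<Rightarrow> 's \<Rightarrow> real) \<Rightarrow> ('s \<Rightarrow> 'a \<Rightarrow> 's \<Rightarrow> real)
    \<Rightarrow> real \<Rightarrow> (('s \<Rightarrow> 'a \<Rightarrow> real) \<Rightarrow> 's \<Rightarrow> 'a) \<Rightarrow> 's \<Rightarrow> 'a \<Rightarrow> 's
    \<Rightarrow> ('s \<Rightarrow> 'a \<Rightarrow> real) \<Rightarrow> ('s \<Rightarrow> 'a \<Rightarrow> real) \<Rightarrow> ('s \<Rightarrow> 'a \<Rightarrow> real)" where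
  "noise d P r \<gamma> greedy sk ak sk' X Y = (\<lambda>s a.
     (if s = sk \<and> a = ak then r sk ak sk' + \<gamma> * X sk' (greedy Y sk') - X sk ak else 0)
     - (Dop d (Rexp P r) s a + \<gamma> * Dop d (Pop P (Piop (greedy Y) X)) s a - Dop d X s a))"

definition sdq_step :: "real \<Rightarrow> real \<Rightarrow> ('s \<Rightarrow> 'a \<Rightarrow> 's \<Rightarrow> real) \<Rightarrow> (('s \<Rightarrow> 'a \<Rightarrow> real) \<Rightarrow> 's \<Rightarrow> 'a)
    \<Rightarrow> 's \<Rightarrow> 'a \<Rightarrow> 's \<Rightarrow> ('s \<Rightarrow> 'a \<Rightarrow> real) \<Rightarrow> ('s \<Rightarrow> 'a \<Rightarrow> real) \<Rightarrow> ('s \<Rightarrow> 'a \<Rightarrow> real)" where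
  "sdq_step \<alpha> \<gamma> r greedy sk ak sk' X Y = (\<lambda>s a.
     if s = sk \<and> a = ak
     then X sk ak + \<alpha> * (r sk ak sk' + \<gamma> * X sk' (greedy Y sk') - X sk ak)
     else X s a)"

end

theory Submission
  imports Defs
begin

lemma Max_range_le:
  fixes f g :: "'a::finite \<Rightarrow> real"
  assumes "\<And>u. f u \<le> g u" shows "Max (range f) \<le> Max (range g)"
proof -
  have "\<And>u. g u \<le> Max (range g)" by (simp add: Max_ge)
  then have "\<And>u. f u \<le> Max (range g)" using assms by (meson order_trans)
  then show ?thesis by (simp add: Max_le_iff)
qed

lemma Max_range_le_const:
  fixes f :: "'a::finite \<Rightarrow> real"
  assumes "\<And>u. f u \<le> c" shows "Max (range f) \<le> c"
  using assms by (simp add: Max_le_iff)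

lemma Max_range_ge:
  fixes f :: "'a::finite \<Rightarrow> real"
  shows "f u \<le> Max (range f)"
  by (simp add: Max_ge)

lemma Max_range_const:
  "Max (range (\<lambda>u::'a::finite. c::real)) = c"
  by simp

lemma Max_range_shift:
  fixes f g :: "'a::finite \<Rightarrow> real"
  assumes "\<And>u. f u \<le> g u + m" shows "Max (range f) \<le> Max (range g) + m"
proof -
  have "\<And>u. f u \<le> Max (range g) + m" using assms Max_range_ge[of g] by (meson add_right_mono order_trans)
  then show ?thesis by (simp add: Max_le_iff)
qed

lemma Qstar_bellman:
  fixes P :: "'s::finite \<Rightarrow> 'a::finite \<Rightarrow> 's \<Rightarrow> real"
  assumes P_nonneg: "\<And>x u y. P x u y \<ge> 0"
    and P_sum: "\<And>x u. (\<Sum>y\<in>UNIV. P x u y) = 1"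
    and g0: "0 < \<gamma>" and g1: "\<gamma> < 1"
  shows "Qstar P r \<gamma> x u = Rexp P r x u + \<gamma> * (\<Sum>s'\<in>UNIV. P x u s' * Max (range (Qstar P r \<gamma> s')))"
proof -
  define T where "T = (\<lambda>(Q::'s \<Rightarrow> 'a \<Rightarrow> real) x u. Rexp P r x u + \<gamma> * (\<Sum>s'\<in>UNIV. P x u s' * Max (range (Q s'))))"
  have sumP_le: "(\<Sum>s'\<in>UNIV. P x u s' * f s') \<le> (\<Sum>s'\<in>UNIV. P x u s' * g s')" if "\<And>y. f y \<le> g y" for x u f g
    by (rule sum_mono) (simp add: P_nonneg mult_left_mono that)
  have sumP_const: "(\<Sum>s'\<in>UNIV. P x u s' * c) = c" for x u c
    by (simp add: sum_distrib_right[symmetric] P_sum)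
  have mono: "T Q x u \<le> T Q' x u" if "\<And>x u. Q x u \<le> Q' x u" for Q Q' x u
    unfolding T_def using g0 that
    by (auto intro!: mult_left_mono sumP_le Max_range_le)
  define Rm where "Rm = Max (range (\<lambda>(x,u). \<bar>Rexp P r x u\<bar>))"
  have Rm: "\<bar>Rexp P r x u\<bar> \<le> Rm" for x u
    unfolding Rm_def by (rule Max_ge) (auto intro: image_eqI[where x="(x,u)"])
  define B where "B = Rm / (1 - \<gamma>)"
  have B: "Rm + \<gamma> * B = B" using g1 unfolding B_def by (simp add: field_simps)
  define S where "S = {Q. (\<forall>x u. Q x u \<le> T Q x u \<and> Q x u \<le> B)}"
  have Tle: "T Q x u \<le> B" if "\<And>x u. Q x u \<le> B" for Q x u
  proof -
    have "(\<Sum>s'\<in>UNIV. P x u s' * Max (range (Q s'))) \<le> (\<Sum>s'\<in>UNIV. P x u s' * B)"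
      by (rule sumP_le) (simp add: Max_range_le_const that)
    then have "\<gamma> * (\<Sum>s'\<in>UNIV. P x u s' * Max (range (Q s'))) \<le> \<gamma> * B"
      using g0 sumP_const by (metis mult_left_mono less_imp_le)
    then show ?thesis unfolding T_def using Rm[of x u] B by linarith
  qed
  have lowS: "(\<lambda>x u. - B) \<in> S"
  proof -
    have Rm0: "0 \<le> Rm" using Rm[of undefined undefined] by linarith
    have B0: "0 \<le> B" unfolding B_def using Rm0 g1 by simp
    have "- B \<le> T (\<lambda>x u. - B) x u" for x u
      unfolding T_def using Rm[of x u] B sumP_const[of x u B] g0 by (simp add: sum_negf)
    then show ?thesis unfolding S_def using B0 by auto
  qed
  define Qh where "Qh = (\<lambda>x u. Sup ((\<lambda>Q. Q x u) ` S))"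
  have bdd: "bdd_above ((\<lambda>Q. Q x u) ` S)" for x u
    by (rule bdd_aboveI[where M=B]) (auto simp: S_def)
  have upper: "Q x u \<le> Qh x u" if "Q \<in> S" for Q x u
    unfolding Qh_def by (rule cSup_upper) (use that bdd in auto)
  have QhB: "Qh x u \<le> B" for x u
    unfolding Qh_def by (rule cSup_least) (use lowS in blast, auto simp: S_def)
  have Qh_le: "Qh x u \<le> T Qh x u" for x u
  proof -
    have "Sup ((\<lambda>Q. Q x u) ` S) \<le> T Qh x u"
    proof (rule cSup_least)
      show "(\<lambda>Q. Q x u) ` S \<noteq> {}" using lowS by auto
      fix v assume "v \<in> (\<lambda>Q. Q x u) ` S"
      then obtain Q where Q: "Q \<in> S" "v = Q x u" by auto
      have "Q x u \<le> T Q x u" using Q by (auto simp: S_def)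
      also have "\<dots> \<le> T Qh x u" by (rule mono) (rule upper[OF Q(1)])
      finally show "v \<le> T Qh x u" using Q by simp
    qed
    then show ?thesis by (simp add: Qh_def)
  qed
  have "T Qh \<in> S" unfolding S_def using Qh_le mono Tle QhB by auto
  then have "T Qh x u \<le> Qh x u" for x u using upper by blast
  with Qh_le have fixQ: "T Qh = Qh" by (intro ext) (meson order_antisym)
  have uniq: "Q1 = Q2" if "T Q1 = Q1" "T Q2 = Q2" for Q1 Q2
  proof -
    define m where "m = Max (range (\<lambda>(x,u). \<bar>Q1 x u - Q2 x u\<bar>))"
    have m: "\<bar>Q1 x u - Q2 x u\<bar> \<le> m" for x u
      unfolding m_def by (rule Max_ge) (auto intro: image_eqI[where x="(x,u)"])
    have m0: "0 \<le> m" using m[of undefined undefined] by linarith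
    have c: "\<bar>T Q1 x u - T Q2 x u\<bar> \<le> \<gamma> * m" for x u
    proof -
      have a1: "Max (range (Q1 y)) \<le> Max (range (Q2 y)) + m" for y
        by (rule Max_range_shift) (use m in \<open>smt (verit)\<close>)
      have a2: "Max (range (Q2 y)) \<le> Max (range (Q1 y)) + m" for y
        by (rule Max_range_shift) (use m in \<open>smt (verit)\<close>)
      have s1: "(\<Sum>s'\<in>UNIV. P x u s' * Max (range (Q1 s'))) \<le> (\<Sum>s'\<in>UNIV. P x u s' * (Max (range (Q2 s')) + m))"
        by (rule sumP_le) (rule a1)
      have s2: "(\<Sum>s'\<in>UNIV. P x u s' * Max (range (Q2 s'))) \<le> (\<Sum>s'\<in>UNIV. P x u s' * (Max (range (Q1 s')) + m))"
        by (rule sumP_le) (rule a2)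
      have e1: "(\<Sum>s'\<in>UNIV. P x u s' * (Max (range (Q2 s')) + m)) = (\<Sum>s'\<in>UNIV. P x u s' * Max (range (Q2 s'))) + m"
        by (simp add: distrib_left sum.distrib sumP_const)
      have e2: "(\<Sum>s'\<in>UNIV. P x u s' * (Max (range (Q1 s')) + m)) = (\<Sum>s'\<in>UNIV. P x u s' * Max (range (Q1 s'))) + m"
        by (simp add: distrib_left sum.distrib sumP_const)
      have "\<bar>(\<Sum>s'\<in>UNIV. P x u s' * Max (range (Q1 s'))) - (\<Sum>s'\<in>UNIV. P x u s' * Max (range (Q2 s')))\<bar> \<le> m"
        using s1 s2 e1 e2 by linarith
      then have "\<gamma> * \<bar>(\<Sum>s'\<in>UNIV. P x u s' * Max (range (Q1 s'))) - (\<Sum>s'\<in>UNIV. P x u s' * Max (range (Q2 s')))\<bar> \<le> \<gamma> * m"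
        using g0 by (simp add: mult_left_mono)
      then show ?thesis unfolding T_def using g0 by (simp add: right_diff_distrib[symmetric] abs_mult)
    qed
    have "Max (range (\<lambda>(x,u). \<bar>Q1 x u - Q2 x u\<bar>)) \<le> \<gamma> * m"
      by (rule Max.boundedI) (use c that in \<open>auto\<close>)
    then have "m \<le> \<gamma> * m" by (simp only: m_def[symmetric])
    then have "m = 0" using m0 g1 g0 by (smt (verit) mult_le_cancel_right1)
    then show ?thesis using m by (intro ext) force
  qed
  have ex: "\<exists>!Q. \<forall>x u. Q x u = Rexp P r x u + \<gamma> * (\<Sum>s'\<in>UNIV. P x u s' * Max (range (Q s')))"
  proof (rule ex1I[of _ Qh])
    show "\<forall>x u. Qh x u = Rexp P r x u + \<gamma> * (\<Sum>s'\<in>UNIV. P x u s' * Max (range (Qh s')))"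
    proof (intro allI)
      fix x u
      have "T Qh x u = Qh x u" using fixQ by simp
      then show "Qh x u = Rexp P r x u + \<gamma> * (\<Sum>s'\<in>UNIV. P x u s' * Max (range (Qh s')))"
        unfolding T_def by linarith
    qed
    fix Q assume asm: "\<forall>x u. Q x u = Rexp P r x u + \<gamma> * (\<Sum>s'\<in>UNIV. P x u s' * Max (range (Q s')))"
    have "T Q = Q"
    proof (intro ext)
      fix x u show "T Q x u = Q x u" unfolding T_def using asm[rule_format, of x u] by linarith
    qed
    then show "Q = Qh" using uniq fixQ by blast
  qed
  show ?thesis using theI'[OF ex] unfolding Qstar_def by blast
qed

theorem proposition2:
  fixes P :: "'s::finite \<Rightarrow> 'a::finite \<Rightarrow> 's \<Rightarrow> real"
    and r :: "'s \<Rightarrow> 'a \<Rightarrow> 's \<Rightarrow> real"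
    and d :: "'s \<Rightarrow> 'a \<Rightarrow> real"
    and \<gamma> \<alpha> :: real
    and greedy :: "('s \<Rightarrow> 'a \<Rightarrow> real) \<Rightarrow> 's \<Rightarrow> 'a"
    and s s' :: "nat \<Rightarrow> 's" and a :: "nat \<Rightarrow> 'a"
    and QA QB QAL QBL :: "nat \<Rightarrow> 's \<Rightarrow> 'a \<Rightarrow> real"
  assumes P_nonneg: "\<And>x u y. P x u y \<ge> 0"
    and P_sum: "\<And>x u. (\<Sum>y\<in>UNIV. P x u y) = 1"
    and gamma: "0 < \<gamma>" "\<gamma> < 1"
    and alpha: "0 < \<alpha>" "\<alpha> < 1"
    and d_pos: "\<And>x u. d x u > 0"
    and d_sum: "(\<Sum>(x, u)\<in>UNIV. d x u) = 1"
    and greedy_max: "\<And>Q x u. Q x u \<le> Q x (greedy Q x)"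
    and QA_step: "\<And>k. QA (Suc k) = sdq_step \<alpha> \<gamma> r greedy (s k) (a k) (s' k) (QA k) (QB k)"
    and QB_step: "\<And>k. QB (Suc k) = sdq_step \<alpha> \<gamma> r greedy (s k) (a k) (s' k) (QB k) (QA k)"
    and QAL_step: "\<And>k. QAL (Suc k) = (\<lambda>x u.
          Qstar P r \<gamma> x u
          + (QAL k x u - Qstar P r \<gamma> x u)
          + \<alpha> * \<gamma> * Dop d (Pop P (Piop (greedy (Qstar P r \<gamma>)) (\<lambda>y v. QAL k y v - Qstar P r \<gamma> y v))) x u
          - \<alpha> * Dop d (\<lambda>y v. QAL k y v - Qstar P r \<gamma> y v) x u
          + \<alpha> * \<gamma> * Dop d (Pop P (\<lambda>y.
                Piop (greedy (QB k)) (\<lambda>z v. QA k z v - QB k z v) y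
              - Piop (greedy (Qstar P r \<gamma>)) (\<lambda>z v. QA k z v - QB k z v) y)) x u
          + \<alpha> * noise d P r \<gamma> greedy (s k) (a k) (s' k) (QA k) (QB k) x u)"
    and QBL_step: "\<And>k. QBL (Suc k) = (\<lambda>x u.
          Qstar P r \<gamma> x u
          + (QBL k x u - Qstar P r \<gamma> x u)
          + \<alpha> * \<gamma> * Dop d (Pop P (Piop (greedy (Qstar P r \<gamma>)) (\<lambda>y v. QBL k y v - Qstar P r \<gamma> y v))) x u
          - \<alpha> * Dop d (\<lambda>y v. QBL k y v - Qstar P r \<gamma> y v) x u
          + \<alpha> * \<gamma> * Dop d (Pop P (\<lambda>y.
                Piop (greedy (Qstar P r \<gamma>)) (\<lambda>z v. QA k z v - QB k z v) y
              - Piop (greedy (QA k)) (\<lambda>z v. QA k z v - QB k z v) y)) x u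
          + \<alpha> * noise d P r \<gamma> greedy (s k) (a k) (s' k) (QB k) (QA k) x u)"
    and init_A: "(\<lambda>x u. QAL 0 x u - Qstar P r \<gamma> x u) \<le> (\<lambda>x u. QA 0 x u - Qstar P r \<gamma> x u)"
    and init_B: "(\<lambda>x u. QBL 0 x u - Qstar P r \<gamma> x u) \<le> (\<lambda>x u. QB 0 x u - Qstar P r \<gamma> x u)"
  shows "\<forall>k. (\<lambda>x u. QAL k x u - Qstar P r \<gamma> x u) \<le> (\<lambda>x u. QA k x u - Qstar P r \<gamma> x u)
           \<and> (\<lambda>x u. QBL k x u - Qstar P r \<gamma> x u) \<le> (\<lambda>x u. QB k x u - Qstar P r \<gamma> x u)"
proof -
  define q where "q = Qstar P r \<gamma>"
  define gq where "gq = greedy q"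
  have bell: "q x u = Rexp P r x u + \<gamma> * (\<Sum>y\<in>UNIV. P x u y * q y (gq y))" for x u
  proof -
    have "Max (range (q y)) = q y (gq y)" for y
      unfolding gq_def by (rule Max_eqI) (auto intro: greedy_max)
    then show ?thesis using Qstar_bellman[OF P_nonneg P_sum gamma, where r=r and x=x and u=u] unfolding q_def by simp
  qed
  have d1: "d x u \<le> 1" for x u
  proof -
    have "(\<lambda>(x,u). d x u) (x,u) \<le> (\<Sum>(x, u)\<in>UNIV. d x u)"
      by (rule member_le_sum) (auto simp: less_imp_le d_pos)
    then show ?thesis using d_sum by simp
  qed
  have ad: "0 \<le> 1 - \<alpha> * d x u" for x u
  proof -
    have "\<alpha> * d x u \<le> 1 * 1" using alpha d1[of x u] d_pos[of x u] by (intro mult_mono) auto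
    then show ?thesis by simp
  qed
  have main: "\<forall>x u. QAL k x u \<le> QA k x u \<and> QBL k x u \<le> QB k x u" for k
  proof (induction k)
    case 0
    then show ?case using init_A init_B by (auto simp: le_fun_def)
  next
    case (Suc k)
    define E where "E = (\<lambda>y v. QA k y v - QAL k y v)"
    define F where "F = (\<lambda>y v. QB k y v - QBL k y v)"
    have E0: "0 \<le> E y v" for y v using Suc unfolding E_def by (simp add: le_fun_def)
    have F0: "0 \<le> F y v" for y v using Suc unfolding F_def by (simp add: le_fun_def)
    have stepA: "QA (Suc k) x u - QAL (Suc k) x u = (1 - \<alpha> * d x u) * E x u
       + \<alpha> * \<gamma> * d x u * (\<Sum>y\<in>UNIV. P x u y * (QB k y (greedy (QB k) y) - QB k y (gq y) + E y (gq y)))" for x u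
    proof -
      define I where "I = (if x = s k \<and> u = a k then r (s k) (a k) (s' k) + \<gamma> * QA k (s' k) (greedy (QB k) (s' k)) - QA k (s k) (a k) else 0)"
      define S1 where "S1 = (\<Sum>y\<in>UNIV. P x u y * (QAL k y (gq y) - q y (gq y)))"
      define S2 where "S2 = (\<Sum>y\<in>UNIV. P x u y * ((QA k y (greedy (QB k) y) - QB k y (greedy (QB k) y)) - (QA k y (gq y) - QB k y (gq y))))"
      define S3 where "S3 = (\<Sum>y\<in>UNIV. P x u y * QA k y (greedy (QB k) y))"
      define S4 where "S4 = (\<Sum>y\<in>UNIV. P x u y * q y (gq y))"
      define S where "S = (\<Sum>y\<in>UNIV. P x u y * (QB k y (greedy (QB k) y) - QB k y (gq y) + E y (gq y)))"
      have sumeq: "S = S3 - S4 - S1 - S2"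
        unfolding S_def S1_def S2_def S3_def S4_def E_def by (simp add: algebra_simps sum.distrib sum_subtractf)
      have h1: "QA (Suc k) x u = QA k x u + \<alpha> * I"
        unfolding QA_step sdq_step_def I_def by auto
      have h2: "QAL (Suc k) x u = q x u + (QAL k x u - q x u) + \<alpha> * \<gamma> * (d x u * S1) - \<alpha> * (d x u * (QAL k x u - q x u))
          + \<alpha> * \<gamma> * (d x u * S2) + \<alpha> * (I - (d x u * Rexp P r x u + \<gamma> * (d x u * S3) - d x u * QA k x u))"
        unfolding QAL_step noise_def Dop_def Pop_def Piop_def I_def S1_def S2_def S3_def q_def gq_def by simp
      have R: "Rexp P r x u = q x u - \<gamma> * S4" using bell[of x u] unfolding S4_def by simp
      show ?thesis unfolding S_def[symmetric] unfolding h1 h2 R sumeq E_def by (simp add: algebra_simps)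
    qed
    have stepB: "QB (Suc k) x u - QBL (Suc k) x u = (1 - \<alpha> * d x u) * F x u
       + \<alpha> * \<gamma> * d x u * (\<Sum>y\<in>UNIV. P x u y * (QA k y (greedy (QA k) y) - QA k y (gq y) + F y (gq y)))" for x u
    proof -
      define I where "I = (if x = s k \<and> u = a k then r (s k) (a k) (s' k) + \<gamma> * QB k (s' k) (greedy (QA k) (s' k)) - QB k (s k) (a k) else 0)"
      define S1 where "S1 = (\<Sum>y\<in>UNIV. P x u y * (QBL k y (gq y) - q y (gq y)))"
      define S2 where "S2 = (\<Sum>y\<in>UNIV. P x u y * ((QA k y (gq y) - QB k y (gq y)) - (QA k y (greedy (QA k) y) - QB k y (greedy (QA k) y))))"
      define S3 where "S3 = (\<Sum>y\<in>UNIV. P x u y * QB k y (greedy (QA k) y))"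
      define S4 where "S4 = (\<Sum>y\<in>UNIV. P x u y * q y (gq y))"
      define S where "S = (\<Sum>y\<in>UNIV. P x u y * (QA k y (greedy (QA k) y) - QA k y (gq y) + F y (gq y)))"
      have sumeq: "S = S3 - S4 - S1 - S2"
        unfolding S_def S1_def S2_def S3_def S4_def F_def by (simp add: algebra_simps sum.distrib sum_subtractf)
      have h1: "QB (Suc k) x u = QB k x u + \<alpha> * I"
        unfolding QB_step sdq_step_def I_def by auto
      have h2: "QBL (Suc k) x u = q x u + (QBL k x u - q x u) + \<alpha> * \<gamma> * (d x u * S1) - \<alpha> * (d x u * (QBL k x u - q x u))
          + \<alpha> * \<gamma> * (d x u * S2) + \<alpha> * (I - (d x u * Rexp P r x u + \<gamma> * (d x u * S3) - d x u * QB k x u))"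
        unfolding QBL_step noise_def Dop_def Pop_def Piop_def I_def S1_def S2_def S3_def q_def gq_def by simp
      have R: "Rexp P r x u = q x u - \<gamma> * S4" using bell[of x u] unfolding S4_def by simp
      show ?thesis unfolding S_def[symmetric] unfolding h1 h2 R sumeq F_def by (simp add: algebra_simps)
    qed
    show ?case
    proof (intro allI conjI)
      fix x u
      have sA: "0 \<le> (\<Sum>y\<in>UNIV. P x u y * (QB k y (greedy (QB k) y) - QB k y (gq y) + E y (gq y)))"
        by (intro sum_nonneg mult_nonneg_nonneg P_nonneg add_nonneg_nonneg E0) (simp add: greedy_max)
      have sB: "0 \<le> (\<Sum>y\<in>UNIV. P x u y * (QA k y (greedy (QA k) y) - QA k y (gq y) + F y (gq y)))"
        by (intro sum_nonneg mult_nonneg_nonneg P_nonneg add_nonneg_nonneg F0) (simp add: greedy_max)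
      have c: "0 \<le> \<alpha> * \<gamma> * d x u" using alpha gamma d_pos[of x u] by simp
      show "QAL (Suc k) x u \<le> QA (Suc k) x u"
        using stepA[of x u] mult_nonneg_nonneg[OF ad[of x u] E0[of x u]] mult_nonneg_nonneg[OF c sA] by linarith
      show "QBL (Suc k) x u \<le> QB (Suc k) x u"
        using stepB[of x u] mult_nonneg_nonneg[OF ad[of x u] F0[of x u]] mult_nonneg_nonneg[OF c sB] by linarith
    qed
  qed
  show ?thesis using main by (simp add: le_fun_def)
qed

end
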